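(* For each prime power $q$, there exists an $[n,3]_q$ MWS code with $n\le\frac{q-1}{2}\left(q^3+q^2+q\right)$.
   Context: An $[n,k]_q$ code is a $k$-dimensional subspace of $\mathbb{F}_q^n$, non-degenerate (no coordinate identically zero on the code). It is MWS if the set of its non-zero Hamming weights has cardinality $\frac{q^k-1}{q-1}$. *)

theory Defs
  imports Complex_Main
begin

text \<open>Vectors of \<open>F^n\<close> are represented as functions \<open>nat \<Rightarrow> 'a\<close> vanishing at all
  coordinates \<open>\<ge> n\<close>; coordinates are \<open>0..<n\<close>.\<close>

definition in_Fn :: "nat \<Rightarrow> (nat \<Rightarrow> 'a::zero) \<Rightarrow> bool" where
  "in_Fn n x \<longleftrightarrow> (\<forall>j\<ge>n. x j = 0)"

definition is_subspace_dim :: "nat \<Rightarrow> nat \<Rightarrow> (nat \<Rightarrow> 'a::field) set \<Rightarrow> bool" where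
  "is_subspace_dim n k C \<longleftrightarrow>
     (\<exists>b :: nat \<Rightarrow> nat \<Rightarrow> 'a.
        (\<forall>i<k. in_Fn n (b i)) \<and>
        (\<forall>c :: nat \<Rightarrow> 'a. (\<forall>j. (\<Sum>i<k. c i * b i j) = 0) \<longrightarrow> (\<forall>i<k. c i = 0)) \<and>
        C = {x. \<exists>c :: nat \<Rightarrow> 'a. \<forall>j. x j = (\<Sum>i<k. c i * b i j)})"

definition is_linear_code :: "nat \<Rightarrow> nat \<Rightarrow> (nat \<Rightarrow> 'a::field) set \<Rightarrow> bool" where
  "is_linear_code n k C \<longleftrightarrow>
     is_subspace_dim n k C \<and> (\<forall>j<n. \<exists>x\<in>C. x j \<noteq> 0)"

definition hamming_wt :: "nat \<Rightarrow> (nat \<Rightarrow> 'a::zero) \<Rightarrow> nat" where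
  "hamming_wt n x = card {j. j < n \<and> x j \<noteq> 0}"

definition nonzero_weights :: "nat \<Rightarrow> (nat \<Rightarrow> 'a::zero) set \<Rightarrow> nat set" where
  "nonzero_weights n C = hamming_wt n ` (C - {\<lambda>_. 0})"

definition is_MWS_code :: "nat \<Rightarrow> nat \<Rightarrow> (nat \<Rightarrow> 'a::{field,finite}) set \<Rightarrow> bool" where
  "is_MWS_code n k C \<longleftrightarrow>
     is_linear_code n k C \<and>
     card (nonzero_weights n C) = (card (UNIV :: 'a set) ^ k - 1) div (card (UNIV :: 'a set) - 1)"

end

theory Submission
  imports Defs
begin


lemma dig2:
  fixes q a b a' b' :: nat
  assumes "a < q" "a' < q" "a + q*b = a' + q*b'"
  shows "a = a' \<and> b = b'"
proof -
  have "(a + q*b) mod q = a" using assms(1) by simp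
  moreover have "(a' + q*b') mod q = a'" using assms(2) by simp
  ultimately have "a = a'" using assms(3) by simp
  moreover have "q > 0" using assms by simp
  ultimately show ?thesis using assms(3) by simp
qed

lemma dig3:
  fixes q a b c a' b' c' :: nat
  assumes "a < q" "a' < q" "b < q" "b' < q" "a + q*b + q^2*c = a' + q*b' + q^2*c'"
  shows "a = a' \<and> b = b' \<and> c = c'"
proof -
  have e: "a + q*(b + q*c) = a' + q*(b' + q*c')" using assms(5) by (simp add: power2_eq_square algebra_simps)
  from dig2[OF assms(1,2) e] have "a = a'" "b + q*c = b' + q*c'" by auto
  with dig2[OF assms(3,4) this(2)] show ?thesis by auto
qed

lemma modq: "(a::nat) < q \<Longrightarrow> (a + q * x) mod q = a" by simp



context
  fixes q SF :: nat
  assumes q2: "2 \<le> q" and SFq: "2*SF + 2 = q*(q-1)"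
begin



lemma SF_lt: "SF + q < q^2"
proof -
  have "2*(SF + q) + 2 = q*(q+1)" using SFq q2
    by (cases q) (simp_all add: algebra_simps)
  moreover have "q*(q+1) \<le> 2*q^2" using q2 by (simp add: power2_eq_square)
  ultimately have "2*(SF + q) + 2 \<le> 2*q^2" by simp
  thus ?thesis by simp
qed

lemma m1: "(1 + q*x) mod q = 1"
proof -
  have "(1 + q*x) mod q = 1 mod q" by (metis mod_mult_self2 mult.commute)
  also have "1 mod q = 1" using q2 by simp
  finally show ?thesis .
qed
lemma m0: "(q*x) mod q = 0" by simp

lemma X0_mod: "(q^2*(SF+1)+1) mod q = 1"
  using m1[of "q*(SF+1)"] by (simp add: power2_eq_square algebra_simps)
lemma Y0_mod: "(q*SF+q+1) mod q = 1"
  using m1[of "SF+1"] by (simp add: algebra_simps)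
lemma E1_mod: "(q^2*h+q) mod q = 0"
  using m0[of "q*h+1"] by (simp add: power2_eq_square algebra_simps)
lemma G_mod: "f < q \<Longrightarrow> (f + q*g + q^2*h) mod q = f"
  using modq[of f q "g + q*h"] by (simp add: power2_eq_square algebra_simps)

lemma G_X0: "f < q \<Longrightarrow> f \<noteq> 1 \<Longrightarrow> f + q*g + q^2*h \<noteq> q^2*(SF+1)+1"
  using G_mod X0_mod by metis
lemma G_Y0: "f < q \<Longrightarrow> f \<noteq> 1 \<Longrightarrow> f + q*g + q^2*h \<noteq> q*SF+q+1"
  using G_mod Y0_mod by metis
lemma G_E3: "f' < q \<Longrightarrow> 1 \<le> h \<Longrightarrow> f + q*g + q^2*h \<noteq> f'+1"
proof -
  assume "f' < q" "1 \<le> h"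
  have "q^2 \<le> q^2*h" using \<open>1 \<le> h\<close> by simp
  moreover have "q < q^2" using q2 by (simp add: power2_eq_square)
  ultimately show ?thesis using \<open>f' < q\<close> by linarith
qed
lemma G_E2: "g' < q \<Longrightarrow> 1 \<le> h \<Longrightarrow> f + q*g + q^2*h \<noteq> q*g'"
proof -
  assume "g' < q" "1 \<le> h"
  have "q^2 \<le> q^2*h" using \<open>1 \<le> h\<close> by simp
  moreover have "q*g' < q^2" using \<open>g' < q\<close> q2 by (simp add: power2_eq_square)
  ultimately show ?thesis by linarith
qed
lemma G_E1: "f < q \<Longrightarrow> g < q \<Longrightarrow> g \<noteq> 1 \<Longrightarrow> f + q*g + q^2*h \<noteq> q^2*h'+q"
proof
  assume a: "f < q" "g < q" "g \<noteq> 1" "f + q*g + q^2*h = q^2*h'+q"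
  have "f + q*g + q^2*h = 0 + q*1 + q^2*h'" using a(4) by simp
  from dig3[OF a(1) _ a(2) _ this] q2 a(3) show False by simp
qed
lemma G_Z0: "1 \<le> h \<Longrightarrow> f + q*g + q^2*h \<noteq> SF + q"
proof -
  assume "1 \<le> h"
  have "q^2 \<le> q^2*h" using \<open>1 \<le> h\<close> by simp
  thus ?thesis using SF_lt by linarith
qed
lemma E3_E2: "f < q \<Longrightarrow> g \<noteq> 1 \<Longrightarrow> f + 1 \<noteq> q*g"
proof
  assume a: "f < q" "g \<noteq> 1" "f + 1 = q*g"
  show False
  proof (cases "g = 0")
    case True thus False using a by simp
  next
    case False
    hence "2 \<le> g" using a(2) by simp
    hence "q*2 \<le> q*g" by simp
    thus False using a q2 by linarith
  qed
qed
lemma E3_X0: "f < q \<Longrightarrow> f + 1 \<noteq> q^2*(SF+1)+1"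
proof -
  assume "f < q"
  have "q^2 \<le> q^2*(SF+1)" by simp
  moreover have "q < q^2" using q2 by (simp add: power2_eq_square)
  ultimately show ?thesis using \<open>f < q\<close> by linarith
qed
lemma E3_E1: "f < q \<Longrightarrow> 1 \<le> h \<Longrightarrow> f + 1 \<noteq> q^2*h+q"
proof -
  assume "f < q" "1 \<le> h"
  have "q^2 \<le> q^2*h" using \<open>1 \<le> h\<close> by simp
  moreover have "q < q^2" using q2 by (simp add: power2_eq_square)
  ultimately show ?thesis using \<open>f < q\<close> by linarith
qed
lemma E3_Y0: "f < q \<Longrightarrow> f + 1 \<noteq> q*SF+q+1"
  by simp
lemma E3_Z0: "f < q \<Longrightarrow> f \<noteq> 1 \<Longrightarrow> f + 1 \<noteq> SF + q"
proof
  assume a: "f < q" "f \<noteq> 1" "f + 1 = SF + q"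
  hence "SF = 0" "f = q - 1" by linarith+
  hence "q*(q-1) = 2" using SFq by simp
  moreover have "q \<ge> 3 \<Longrightarrow> q*(q-1) \<ge> 3*2" by (intro mult_le_mono) auto
  ultimately have "q = 2" using q2 by linarith
  thus False using a \<open>f = q - 1\<close> by simp
qed
lemma E2_X0: "q*g \<noteq> q^2*(SF+1)+1"
  by (metis X0_mod m0 zero_neq_one)
lemma E2_E1: "g < q \<Longrightarrow> 1 \<le> h \<Longrightarrow> q*g \<noteq> q^2*h+q"
proof
  assume a: "g < q" "q*g = q^2*h+q" and h1: "1 \<le> h"
  hence "q*g = q*(q*h+1)" by (simp add: power2_eq_square algebra_simps)
  hence "g = q*h+1" using q2 by (metis mult_left_cancel not_numeral_le_zero)
  moreover have "q \<le> q*h" using h1 by simp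
  ultimately show False using a(1) by linarith
qed
lemma E2_Y0: "q*g \<noteq> q*SF+q+1"
  by (metis Y0_mod m0 zero_neq_one)
lemma E2_Z0: "g \<noteq> 1 \<Longrightarrow> q*g \<noteq> SF+q"
proof
  assume a: "g \<noteq> 1" "q*g = SF+q"
  hence "2*(q*g) + 2 = q*(q+1)" using SFq q2
    by (cases q) (simp_all add: algebra_simps)
  hence e: "q*(2*g) + 2 = q*(q+1)" by simp
  hence "q dvd 2" by (metis dvd_add_right_iff dvd_triv_left)
  hence "q = 2" using q2 by (simp add: dvd_imp_le le_antisym)
  thus False using e a by simp
qed
lemma X0_E1: "q^2*(SF+1)+1 \<noteq> q^2*h+q"
  by (metis X0_mod E1_mod zero_neq_one)
lemma X0_Y0: "q^2*(SF+1)+1 \<noteq> q*SF+q+1"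
proof
  assume "q^2*(SF+1)+1 = q*SF+q+1"
  hence "q*(q*(SF+1)) = q*(SF+1)" by (simp add: power2_eq_square algebra_simps)
  hence "q*(SF+1) = 1*(SF+1)" using q2 by (metis mult_left_cancel not_numeral_le_zero nat_mult_1)
  hence "q = 1" by (metis mult_right_cancel add_is_0 one_neq_zero)
  thus False using q2 by simp
qed
lemma X0_Z0: "q^2*(SF+1)+1 \<noteq> SF+q"
proof -
  have "q^2*(SF+1) = q^2*SF + q^2" by (simp add: algebra_simps)
  moreover have "SF \<le> q^2*SF" using q2 by (simp add: power2_eq_square)
  moreover have "q < q^2" using q2 by (simp add: power2_eq_square)
  ultimately show ?thesis by linarith
qed
lemma E1_Y0: "q^2*h+q \<noteq> q*SF+q+1"
  by (metis E1_mod Y0_mod zero_neq_one)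
lemma E1_Z0: "1 \<le> h \<Longrightarrow> q^2*h+q \<noteq> SF+q"
proof -
  assume "1 \<le> h"
  have "q^2 \<le> q^2*h" using \<open>1 \<le> h\<close> by simp
  thus ?thesis using SF_lt by linarith
qed
lemma Y0_Z0: "q*SF+q+1 \<noteq> SF+q"
proof -
  have "SF \<le> q*SF" using q2 by simp
  thus ?thesis by linarith
qed

end


definition dotv :: "'a::field \<times> 'a \<times> 'a \<Rightarrow> 'a \<times> 'a \<times> 'a \<Rightarrow> 'a" where
  "dotv c v = fst c * fst v + fst (snd c) * fst (snd v) + snd (snd c) * snd (snd v)"

definition cv :: "('a::field \<times> 'a \<times> 'a) list \<Rightarrow> nat \<Rightarrow> nat \<Rightarrow> 'a" where
  "cv cols i j = (if j < length cols then (if i = 0 then fst (cols!j)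
     else if i = 1 then fst (snd (cols!j)) else snd (snd (cols!j))) else 0)"

definition cword :: "('a::field \<times> 'a \<times> 'a) list \<Rightarrow> 'a \<times> 'a \<times> 'a \<Rightarrow> nat \<Rightarrow> 'a" where
  "cword cols c j = (if j < length cols then dotv c (cols!j) else 0)"

definition Zc :: "('a::field \<times> 'a \<times> 'a) list \<Rightarrow> 'a \<times> 'a \<times> 'a \<Rightarrow> nat" where
  "Zc cols c = length (filter (\<lambda>v. dotv c v = 0) cols)"

definition Rset :: "('a::field \<times> 'a \<times> 'a) set" where
  "Rset = {(c0,c1,c2). c0 = 1 \<or> (c0 = 0 \<and> c1 = 1) \<or> (c0 = 0 \<and> c1 = 0 \<and> c2 = 1)}"

lemma sum3: "(\<Sum>i<3. f i) = f 0 + f 1 + f (2::nat)"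
  by (simp add: eval_nat_numeral)

lemma cv_sum: "(\<Sum>i<3. c i * cv cols i j) = cword cols (c 0, c 1, c 2) j"
  by (simp add: sum3 cv_def cword_def dotv_def)

lemma C_eq: "{x. \<exists>c::nat\<Rightarrow>'a. \<forall>j. x j = (\<Sum>i<3. c i * cv cols i j)} = range (cword (cols :: ('a::field \<times> 'a \<times> 'a) list))"
proof (intro set_eqI iffI)
  fix x assume "x \<in> {x. \<exists>c::nat\<Rightarrow>'a. \<forall>j. x j = (\<Sum>i<3. c i * cv cols i j)}"
  then obtain c :: "nat \<Rightarrow> 'a" where "\<forall>j. x j = (\<Sum>i<3. c i * cv cols i j)" by auto
  hence "x = cword cols (c 0, c 1, c 2)" by (simp add: cv_sum fun_eq_iff)
  thus "x \<in> range (cword cols)" by simp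
next
  fix x assume "x \<in> range (cword cols)"
  then obtain c0 c1 c2 where x: "x = cword cols (c0, c1, c2)" by auto
  define c :: "nat \<Rightarrow> 'a" where "c = (\<lambda>i. if i = 0 then c0 else if i = 1 then c1 else c2)"
  have "\<forall>j. x j = (\<Sum>i<3. c i * cv cols i j)" by (simp add: cv_sum x c_def)
  thus "x \<in> {x. \<exists>c::nat\<Rightarrow>'a. \<forall>j. x j = (\<Sum>i<3. c i * cv cols i j)}" by blast
qed

lemma wt_cword: "hamming_wt (length cols) (cword cols c) = length cols - Zc cols c"
proof -
  have "{j. j < length cols \<and> cword cols c j \<noteq> 0} = {j. j < length cols \<and> dotv c (cols!j) \<noteq> 0}"
    by (auto simp: cword_def)
  hence "hamming_wt (length cols) (cword cols c) = length (filter (\<lambda>v. dotv c v \<noteq> 0) cols)"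
    by (simp add: hamming_wt_def length_filter_conv_card)
  moreover have "length (filter (\<lambda>v. dotv c v \<noteq> 0) cols) + Zc cols c = length cols"
    unfolding Zc_def using sum_length_filter_compl[of "\<lambda>v. dotv c v = 0" cols] by simp
  ultimately show ?thesis by simp
qed

lemma Zc_scale:
  assumes "k \<noteq> 0"
  shows "Zc cols (k*a, k*b, k*c) = Zc cols (a, b, c)"
proof -
  have e: "\<And>v. dotv (k*a, k*b, k*c) v = k * dotv (a, b, c) v"
    by (simp add: dotv_def algebra_simps)
  have "\<And>v. (dotv (k*a, k*b, k*c) v = 0) = (dotv (a, b, c) v = 0)"
    using assms by (simp add: e)
  thus ?thesis unfolding Zc_def by simp
qed

lemma normalize:
  fixes c0 c1 c2 :: "'a::field"
  assumes "(c0, c1, c2) \<noteq> (0,0,0)"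
  shows "\<exists>k a b c. k \<noteq> 0 \<and> (a,b,c) \<in> Rset \<and> c0 = k*a \<and> c1 = k*b \<and> c2 = k*c"
proof (cases "c0 = 0")
  case False
  thus ?thesis by (intro exI[of _ c0] exI[of _ 1] exI[of _ "c1/c0"] exI[of _ "c2/c0"]) (auto simp: Rset_def)
next
  case c0: True
  show ?thesis
  proof (cases "c1 = 0")
    case False
    thus ?thesis using c0 by (intro exI[of _ c1] exI[of _ 0] exI[of _ 1] exI[of _ "c2/c1"]) (auto simp: Rset_def)
  next
    case True
    thus ?thesis using c0 assms by (intro exI[of _ c2] exI[of _ 0] exI[of _ 0] exI[of _ 1]) (auto simp: Rset_def)
  qed
qed

lemma Rset_eq: "Rset = (\<lambda>(a,b). (1,a,b)) ` UNIV \<union> ((\<lambda>b. (0,1,b)) ` UNIV \<union> {(0,0,1)})"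
proof (intro set_eqI iffI)
  fix x :: "'a \<times> 'a \<times> 'a"
  obtain c0 c1 c2 where x: "x = (c0,c1,c2)" by (cases x) auto
  {
    assume "x \<in> Rset"
    hence "c0 = 1 \<or> (c0 = 0 \<and> c1 = 1) \<or> (c0 = 0 \<and> c1 = 0 \<and> c2 = 1)" using x by (simp add: Rset_def)
    thus "x \<in> (\<lambda>(a,b). (1,a,b)) ` UNIV \<union> ((\<lambda>b. (0,1,b)) ` UNIV \<union> {(0,0,1)})"
    proof (elim disjE)
      assume "c0 = 1" thus ?thesis using x by (intro UnI1) (auto intro: image_eqI[of _ _ "(c1,c2)"])
    next
      assume "c0 = 0 \<and> c1 = 1" thus ?thesis using x by (intro UnI2 UnI1) (auto intro: image_eqI[of _ _ c2])
    qed (simp add: x)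
  }
  {
    assume "x \<in> (\<lambda>(a,b). (1,a,b)) ` UNIV \<union> ((\<lambda>b. (0,1,b)) ` UNIV \<union> {(0,0,1)})"
    thus "x \<in> Rset" by (auto simp: Rset_def)
  }
qed

lemma card_Rset: "card (Rset :: ('a::{field,finite} \<times> 'a \<times> 'a) set) = card (UNIV::'a set)^2 + card (UNIV::'a set) + 1"
proof -
  let ?A = "(\<lambda>(a::'a,b::'a). (1::'a,a,b)) ` UNIV"
  let ?B = "(\<lambda>b::'a. (0::'a,1::'a,b)) ` UNIV"
  have i1: "inj (\<lambda>(a::'a,b::'a). (1::'a,a,b))" by (auto simp: inj_def)
  have i2: "inj (\<lambda>b::'a. (0::'a,1::'a,b))" by (auto simp: inj_def)
  have "card (UNIV :: ('a \<times> 'a) set) = card (UNIV::'a set) * card (UNIV::'a set)"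
    by (metis UNIV_Times_UNIV card_cartesian_product)
  hence c1: "card ?A = card (UNIV::'a set)^2"
    using card_image[OF i1] by (simp add: power2_eq_square)
  have c2: "card ?B = card (UNIV::'a set)"
    using card_image[OF i2] by simp
  have d1: "?B \<inter> {(0,0,1)} = {}" by auto
  have c3: "card (?B \<union> {(0,0,1)}) = card (UNIV::'a set) + 1"
    using card_Un_disjoint[OF _ _ d1] c2 by simp
  have d2: "?A \<inter> (?B \<union> {(0,0,1)}) = {}" by auto
  have "card (?A \<union> (?B \<union> {(0,0,1)})) = card ?A + card (?B \<union> {(0,0,1)})"
    by (rule card_Un_disjoint[OF _ _ d2]) simp_all
  thus ?thesis unfolding Rset_eq using c1 c3 by simp
qed

lemma card_ge2: "2 \<le> card (UNIV::'a::{field,finite} set)"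
proof -
  have "card {0::'a, 1} = 2" by simp
  moreover have "card {0::'a, 1} \<le> card (UNIV::'a set)" by (rule card_mono) auto
  ultimately show ?thesis by simp
qed

lemma div_lem: "(2::nat) \<le> q \<Longrightarrow> (q^3 - 1) div (q - 1) = q^2 + q + 1"
proof -
  assume q: "2 \<le> q"
  then obtain m where m: "q = Suc m" by (cases q) auto
  have e: "q^3 - 1 = (q-1)*(q^2+q+1)" unfolding m by (simp add: eval_nat_numeral algebra_simps)
  have p: "q - 1 \<noteq> 0" using q by simp
  show ?thesis unfolding e by (rule nonzero_mult_div_cancel_left[OF p])
qed

lemma MWS_general:
  fixes cols :: "('a::{field,finite} \<times> 'a \<times> 'a) list"
  assumes nz: "\<forall>v\<in>set cols. v \<noteq> (0,0,0)"
    and indep: "\<And>c. (\<forall>v\<in>set cols. dotv c v = 0) \<Longrightarrow> c = (0,0,0)"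
    and inj: "inj_on (Zc cols) Rset"
  shows "is_MWS_code (length cols) 3 {x. \<exists>c::nat\<Rightarrow>'a. \<forall>j. x j = (\<Sum>i<3. c i * cv cols i j)}"
proof -
  let ?n = "length cols"
  let ?C = "{x. \<exists>c::nat\<Rightarrow>'a. \<forall>j. x j = (\<Sum>i<3. c i * cv cols i j)}"
  have zero_iff: "cword cols c = (\<lambda>_. 0) \<longleftrightarrow> c = (0,0,0)" for c
  proof
    assume h: "cword cols c = (\<lambda>_. 0)"
    have "\<forall>v\<in>set cols. dotv c v = 0"
    proof
      fix v assume "v \<in> set cols"
      then obtain j where "j < ?n" "v = cols!j" by (auto simp: in_set_conv_nth)
      thus "dotv c v = 0" using fun_cong[OF h, of j] by (simp add: cword_def)
    qed
    thus "c = (0,0,0)" by (rule indep)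
  next
    assume "c = (0,0,0)" thus "cword cols c = (\<lambda>_. 0)" by (simp add: fun_eq_iff cword_def dotv_def)
  qed
  have sub: "is_subspace_dim ?n 3 ?C"
    unfolding is_subspace_dim_def
  proof (intro exI[of _ "cv cols"] conjI allI impI)
    fix i assume "i < (3::nat)" show "in_Fn ?n (cv cols i)" by (simp add: in_Fn_def cv_def)
  next
    fix c :: "nat \<Rightarrow> 'a" and i :: nat
    assume h: "\<forall>j. (\<Sum>i<3. c i * cv cols i j) = 0" and i: "i < 3"
    hence "\<forall>j. cword cols (c 0, c 1, c 2) j = 0" by (metis cv_sum)
    hence "cword cols (c 0, c 1, c 2) = (\<lambda>_. 0)" by (simp add: fun_eq_iff)
    hence "(c 0, c 1, c 2) = (0,0,0)" by (rule zero_iff[THEN iffD1])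
    thus "c i = 0" using i by (auto simp: eval_nat_numeral less_Suc_eq)
  qed (rule refl)
  have nondeg: "\<forall>j<?n. \<exists>x\<in>?C. x j \<noteq> 0"
  proof (intro allI impI)
    fix j assume j: "j < ?n"
    obtain a b c where v: "cols!j = (a,b,c)" by (cases "cols!j") auto
    have "(a,b,c) \<noteq> (0,0,0)" using nz j v nth_mem by metis
    have "\<exists>e. cword cols e j \<noteq> 0"
    proof (rule ccontr)
      assume "\<not> (\<exists>e. cword cols e j \<noteq> 0)"
      hence "cword cols (1,0,0) j = 0" "cword cols (0,1,0) j = 0" "cword cols (0,0,1) j = 0" by auto
      hence "(a,b,c) = (0,0,0)" using j v by (simp add: cword_def dotv_def)
      thus False using \<open>(a,b,c) \<noteq> (0,0,0)\<close> by simp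
    qed
    thus "\<exists>x\<in>?C. x j \<noteq> 0" unfolding C_eq by auto
  qed
  have nw: "nonzero_weights ?n ?C = (\<lambda>c. ?n - Zc cols c) ` Rset"
  proof (intro set_eqI iffI)
    fix w assume "w \<in> nonzero_weights ?n ?C"
    then obtain c where c: "cword cols c \<noteq> (\<lambda>_. 0)" "w = hamming_wt ?n (cword cols c)"
      unfolding nonzero_weights_def C_eq by auto
    obtain c0 c1 c2 where ce: "c = (c0,c1,c2)" by (cases c) auto
    have c0nz: "(c0,c1,c2) \<noteq> (0,0,0)" using c(1) zero_iff[of c] ce by simp
    then obtain k a b d where k: "k \<noteq> 0" "(a,b,d) \<in> Rset" "c0 = k*a" "c1 = k*b" "c2 = k*d"
      using normalize[OF c0nz] by blast
    have "w = ?n - Zc cols (a,b,d)" using c(2) ce k by (simp add: wt_cword Zc_scale)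
    thus "w \<in> (\<lambda>c. ?n - Zc cols c) ` Rset" using k(2) by blast
  next
    fix w assume "w \<in> (\<lambda>c. ?n - Zc cols c) ` Rset"
    then obtain r where r: "r \<in> Rset" "w = ?n - Zc cols r" by auto
    have "r \<noteq> (0,0,0)" using r(1) by (auto simp: Rset_def)
    hence "cword cols r \<noteq> (\<lambda>_. 0)" using zero_iff[of r] by simp
    moreover have "w = hamming_wt ?n (cword cols r)" using r(2) by (simp add: wt_cword)
    ultimately show "w \<in> nonzero_weights ?n ?C" unfolding nonzero_weights_def C_eq by auto
  qed
  have inj2: "inj_on (\<lambda>c. ?n - Zc cols c) Rset"
  proof (rule inj_onI)
    fix x y assume "x \<in> Rset" "y \<in> Rset" "?n - Zc cols x = ?n - Zc cols y"
    moreover have "Zc cols x \<le> ?n" "Zc cols y \<le> ?n" unfolding Zc_def by (rule length_filter_le)+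
    ultimately show "x = y" using inj by (simp add: inj_on_def)
  qed
  have cardw: "card (nonzero_weights ?n ?C) = card (UNIV::'a set)^2 + card (UNIV::'a set) + 1"
    using nw card_image[OF inj2] card_Rset by simp
  have "(card (UNIV::'a set)^3 - 1) div (card (UNIV::'a set) - 1) = card (UNIV::'a set)^2 + card (UNIV::'a set) + 1"
    by (rule div_lem[OF card_ge2])
  thus ?thesis unfolding is_MWS_code_def is_linear_code_def using sub nondeg cardw by simp
qed



definition df :: "nat \<Rightarrow> nat" where "df i = (if i = 0 then 0 else Suc i)"

definition blk :: "'b list \<Rightarrow> ('b \<Rightarrow> 'c) \<Rightarrow> ('b \<Rightarrow> nat) \<Rightarrow> 'c list" where
  "blk xs p m = concat (map (\<lambda>s. replicate (m s) (p s)) xs)"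

lemma count_blk: "length (filter P (blk xs p m)) = (\<Sum>s\<leftarrow>xs. if P (p s) then m s else 0)"
  unfolding blk_def by (induction xs) auto

lemma length_blk: "length (blk xs p m) = (\<Sum>s\<leftarrow>xs. m s)"
  unfolding blk_def by (induction xs) auto

lemma sum_suc: "2 * (\<Sum>i<m. Suc i) = m*(m+1)"
  by (induction m) auto

lemma sum_df: "0 < m \<Longrightarrow> (\<Sum>i<m. df i) + 1 = (\<Sum>i<m. Suc i)"
proof (induction m)
  case 0 thus ?case by simp
next
  case (Suc k)
  show ?case
  proof (cases "k = 0")
    case True thus ?thesis by (simp add: df_def)
  next
    case False
    hence "(\<Sum>i<k. df i) + 1 = (\<Sum>i<k. Suc i)" using Suc by simp
    thus ?thesis using False by (simp add: df_def)
  qed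
qed

lemma df_inj: "df i = df j \<Longrightarrow> i = j"
  by (auto simp: df_def split: if_splits)

lemma sum_one:
  fixes m :: "'a::{field,finite} \<Rightarrow> nat"
  assumes "t \<noteq> 0" "\<And>s. s \<noteq> 0 \<Longrightarrow> P s \<longleftrightarrow> s = t"
  shows "(\<Sum>s\<in>-{0}. if P s then m s else 0) = m t"
proof -
  have "(\<Sum>s\<in>-{0}. if P s then m s else 0) = (\<Sum>s\<in>-{0}. if s = t then m s else 0)"
    by (rule sum.cong) (auto simp: assms(2))
  also have "\<dots> = m t" using assms(1) by (subst sum.delta) auto
  finally show ?thesis .
qed

lemma sum_none:
  fixes m :: "'a::{field,finite} \<Rightarrow> nat"
  assumes "\<And>s. s \<noteq> 0 \<Longrightarrow> \<not> P s"
  shows "(\<Sum>s\<in>-{0}. if P s then m s else 0) = 0"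
  by (rule sum.neutral) (auto simp: assms)

lemma sum_all:
  fixes m :: "'a::{field,finite} \<Rightarrow> nat"
  assumes "\<And>s. s \<noteq> 0 \<Longrightarrow> P s"
  shows "(\<Sum>s\<in>-{0}. if P s then m s else 0) = sum m (-{0})"
  by (rule sum.cong) (auto simp: assms)

lemma lin2: "(b::'a::field) \<noteq> 0 \<Longrightarrow> (a + b*s = 0) = (s = -a/b)"
proof -
  assume b: "b \<noteq> 0"
  have "(a + b*s = 0) = (b*s = -a)" by (metis add.commute eq_neg_iff_add_eq_0)
  also have "\<dots> = (s = -a/b)" using b by (auto simp: field_simps)
  finally show ?thesis .
qed
lemma lin1: "(a::'a::field) \<noteq> 0 \<Longrightarrow> (1 + a*s = 0) = (s = -1/a)"
  using lin2[of a 1 s] by simp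

definition mkcols :: "'a::field list \<Rightarrow> ('a \<Rightarrow> nat) \<Rightarrow> nat \<Rightarrow> ('a \<times> 'a \<times> 'a) list" where
  "mkcols nzl phi q = blk nzl (\<lambda>s. (1,s,0)) (\<lambda>s. df (phi s)) @ blk nzl (\<lambda>s. (1,0,s)) (\<lambda>s. q * df (phi s))
     @ blk nzl (\<lambda>s. (0,1,s)) (\<lambda>s. q^2 * Suc (phi s)) @ replicate q (1,0,0) @ [(0,0,1)]"

context
  fixes nzl :: "'a::{field,finite} list" and phi :: "'a \<Rightarrow> nat" and q :: nat
  assumes nzl: "distinct nzl" "set nzl = -{0}"
  and phi: "bij_betw phi (-{0}) {..<q - 1}"
  and qd: "q = card (UNIV::'a set)"
begin

abbreviation "F s \<equiv> df (phi s)"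
abbreviation "H s \<equiv> Suc (phi s)"
abbreviation "SF \<equiv> (\<Sum>i<q-1. df i)"

lemma q2: "2 \<le> q" using card_ge2 qd by simp

lemma SFq: "2*SF + 2 = q*(q-1)"
proof -
  have "0 < q - 1" using q2 by simp
  from sum_df[OF this] have "2*SF + 2 = 2 * (\<Sum>i<q-1. Suc i)" by simp
  also have "\<dots> = (q-1)*q" using sum_suc[of "q-1"] q2 by simp
  finally show ?thesis by simp
qed

lemma phi_lt: "s \<noteq> 0 \<Longrightarrow> phi s < q - 1" using phi by (auto simp: bij_betw_def)
lemma F_lt: "s \<noteq> 0 \<Longrightarrow> F s < q" using phi_lt[of s] by (auto simp: df_def)
lemma F_ne1: "F s \<noteq> 1" by (simp add: df_def)
lemma F_ne1s: "F s \<noteq> Suc 0" by (simp add: df_def)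
lemma H_ge1: "1 \<le> H s" by simp
lemma H_lt: "s \<noteq> 0 \<Longrightarrow> H s < q" using phi_lt[of s] by simp
lemma phi_inj: "s \<noteq> 0 \<Longrightarrow> t \<noteq> 0 \<Longrightarrow> phi s = phi t \<Longrightarrow> s = t"
  using phi by (auto simp: bij_betw_def inj_on_def)
lemma F_inj: "s \<noteq> 0 \<Longrightarrow> t \<noteq> 0 \<Longrightarrow> F s = F t \<Longrightarrow> s = t"
  using phi_inj df_inj by blast

lemma sum_nzl: "(\<Sum>s\<leftarrow>nzl. f s) = sum f (-{0})"
  using nzl by (simp add: sum_list_distinct_conv_sum_set)

lemma sumF: "sum F (-{0}) = SF"
  using sum.reindex_bij_betw[OF phi, of df] by simp
lemma sumH: "sum H (-{0}) = SF + 1"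
proof -
  have "sum H (-{0}) = (\<Sum>i<q-1. Suc i)"
    by (rule sum.reindex_bij_betw[OF phi])
  also have "\<dots> = SF + 1" using sum_df[of "q-1"] q2 by simp
  finally show ?thesis .
qed

abbreviation "cols \<equiv> mkcols nzl phi q"

lemma Zc_app: "Zc (xs @ ys) c = Zc xs c + Zc ys c"
  by (simp add: Zc_def)

lemma Zc_cols: "Zc cols c =
   (\<Sum>s\<in>-{0}. if dotv c (1,s,0) = 0 then F s else 0)
 + (\<Sum>s\<in>-{0}. if dotv c (1,0,s) = 0 then q * F s else 0)
 + (\<Sum>s\<in>-{0}. if dotv c (0,1,s) = 0 then q^2 * H s else 0)
 + (if dotv c (1,0,0) = 0 then q else 0) + (if dotv c (0,0,1) = 0 then 1 else 0)"
  unfolding mkcols_def Zc_app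
  by (simp add: Zc_def count_blk sum_nzl del: mult_Suc_right)

lemma length_cols: "length cols = SF + q*SF + q^2*(SF+1) + q + 1"
proof -
  have "length cols = sum F (-{0}) + sum (\<lambda>s. q * F s) (-{0}) + sum (\<lambda>s. q^2 * H s) (-{0}) + q + 1"
    unfolding mkcols_def by (simp add: length_blk sum_nzl)
  also have "\<dots> = SF + q*SF + q^2*(SF+1) + q + 1"
    by (metis sumF sumH sum_distrib_left)
  finally show ?thesis .
qed

lemma Z_gen: assumes "a \<noteq> 0" "b \<noteq> 0"
  shows "Zc cols (1,a,b) = F(-1/a) + q*F(-1/b) + q^2*H(-a/b)"
proof -
  have s1: "(\<Sum>s\<in>-{0}. if dotv (1,a,b) (1,s,0) = 0 then F s else 0) = F(-1/a)"
    by (rule sum_one) (auto simp: dotv_def lin1 assms)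
  have s2: "(\<Sum>s\<in>-{0}. if dotv (1,a,b) (1,0,s) = 0 then q * F s else 0) = q * F(-1/b)"
    by (rule sum_one) (auto simp: dotv_def lin1 assms)
  have s3: "(\<Sum>s\<in>-{0}. if dotv (1,a,b) (0,1,s) = 0 then q^2 * H s else 0) = q^2 * H(-a/b)"
    by (rule sum_one) (auto simp: dotv_def lin2 assms)
  show ?thesis unfolding Zc_cols s1 s2 s3 using assms by (simp add: dotv_def del: mult_Suc_right)
qed

lemma Z_a: assumes "a \<noteq> 0"
  shows "Zc cols (1,a,0) = F(-1/a) + 1"
proof -
  have s1: "(\<Sum>s\<in>-{0}. if dotv (1,a,0) (1,s,0) = 0 then F s else 0) = F(-1/a)"
    by (rule sum_one) (auto simp: dotv_def lin1 assms)
  have s2: "(\<Sum>s\<in>-{0}. if dotv (1,a,0) (1,0,s) = 0 then q * F s else 0) = 0"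
    by (rule sum_none) (auto simp: dotv_def)
  have s3: "(\<Sum>s\<in>-{0}. if dotv (1,a,0) (0,1,s) = 0 then q^2 * H s else 0) = 0"
    by (rule sum_none) (auto simp: dotv_def assms)
  show ?thesis unfolding Zc_cols s1 s2 s3 using assms by (simp add: dotv_def del: mult_Suc_right)
qed

lemma Z_b: assumes "b \<noteq> 0"
  shows "Zc cols (1,0,b) = q*F(-1/b)"
proof -
  have s1: "(\<Sum>s\<in>-{0}. if dotv (1,0,b) (1,s,0) = 0 then F s else 0) = 0"
    by (rule sum_none) (auto simp: dotv_def)
  have s2: "(\<Sum>s\<in>-{0}. if dotv (1,0,b) (1,0,s) = 0 then q * F s else 0) = q * F(-1/b)"
    by (rule sum_one) (auto simp: dotv_def lin1 assms)
  have s3: "(\<Sum>s\<in>-{0}. if dotv (1,0,b) (0,1,s) = 0 then q^2 * H s else 0) = 0"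
    by (rule sum_none) (auto simp: dotv_def assms)
  show ?thesis unfolding Zc_cols s1 s2 s3 using assms by (simp add: dotv_def del: mult_Suc_right)
qed

lemma Z_100: "Zc cols (1,0,0) = q^2*(SF+1)+1"
proof -
  have s1: "(\<Sum>s\<in>-{0}. if dotv (1,0,0) (1,s,0) = 0 then F s else 0) = 0"
    by (rule sum_none) (auto simp: dotv_def)
  have s2: "(\<Sum>s\<in>-{0}. if dotv (1,0,0) (1,0,s) = 0 then q * F s else 0) = 0"
    by (rule sum_none) (auto simp: dotv_def)
  have s3: "(\<Sum>s\<in>-{0}. if dotv (1,0,0) (0,1,s) = 0 then q^2 * H s else 0) = sum (\<lambda>s. q^2 * H s) (-{0})"
    by (rule sum_all) (auto simp: dotv_def)
  have s4: "sum (\<lambda>s. q^2 * H s) (-{0}) = q^2*(SF+1)"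
    by (metis sumH sum_distrib_left)
  show ?thesis unfolding Zc_cols s1 s2 s3 s4 by (simp add: dotv_def)
qed

lemma Z_0b: assumes "b \<noteq> 0"
  shows "Zc cols (0,1,b) = q^2*H(-1/b) + q"
proof -
  have s1: "(\<Sum>s\<in>-{0}. if dotv (0,1,b) (1,s,0) = 0 then F s else 0) = 0"
    by (rule sum_none) (auto simp: dotv_def)
  have s2: "(\<Sum>s\<in>-{0}. if dotv (0,1,b) (1,0,s) = 0 then q * F s else 0) = 0"
    by (rule sum_none) (auto simp: dotv_def assms)
  have s3: "(\<Sum>s\<in>-{0}. if dotv (0,1,b) (0,1,s) = 0 then q^2 * H s else 0) = q^2 * H(-1/b)"
    by (rule sum_one) (auto simp: dotv_def lin1 assms)
  show ?thesis unfolding Zc_cols s1 s2 s3 using assms by (simp add: dotv_def del: mult_Suc_right)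
qed

lemma Z_010: "Zc cols (0,1,0) = q*SF+q+1"
proof -
  have s1: "(\<Sum>s\<in>-{0}. if dotv (0,1,0) (1,s,0) = 0 then F s else 0) = 0"
    by (rule sum_none) (auto simp: dotv_def)
  have s2: "(\<Sum>s\<in>-{0}. if dotv (0,1,0) (1,0,s) = 0 then q * F s else 0) = sum (\<lambda>s. q * F s) (-{0})"
    by (rule sum_all) (auto simp: dotv_def)
  have s4: "sum (\<lambda>s. q * F s) (-{0}) = q*SF"
    by (metis sumF sum_distrib_left)
  have s3: "(\<Sum>s\<in>-{0}. if dotv (0,1,0) (0,1,s) = 0 then q^2 * H s else 0) = 0"
    by (rule sum_none) (auto simp: dotv_def)
  show ?thesis unfolding Zc_cols s1 s2 s3 s4 by (simp add: dotv_def)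
qed

lemma Z_001: "Zc cols (0,0,1) = SF+q"
proof -
  have s1: "(\<Sum>s\<in>-{0}. if dotv (0,0,1) (1,s,0) = 0 then F s else 0) = sum F (-{0})"
    by (rule sum_all) (auto simp: dotv_def)
  have s2: "(\<Sum>s\<in>-{0}. if dotv (0,0,1) (1,0,s) = 0 then q * F s else 0) = 0"
    by (rule sum_none) (auto simp: dotv_def)
  have s3: "(\<Sum>s\<in>-{0}. if dotv (0,0,1) (0,1,s) = 0 then q^2 * H s else 0) = 0"
    by (rule sum_none) (auto simp: dotv_def)
  show ?thesis unfolding Zc_cols s1 s2 s3 sumF by (simp add: dotv_def)
qed

lemma c12:
  assumes h0: "a \<noteq> 0" and h1: "b \<noteq> 0" and h2: "c \<noteq> 0"
  shows "Zc cols (1,a,b) \<noteq> Zc cols (1,c,0)"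
  unfolding Z_gen[OF h0 h1] Z_a[OF h2]
  by (rule G_E3[OF q2 SFq]; simp add: F_lt F_ne1 F_ne1s H_lt assms)

lemmas c12r = c12[THEN not_sym]

lemma c13:
  assumes h0: "a \<noteq> 0" and h1: "b \<noteq> 0" and h2: "c \<noteq> 0"
  shows "Zc cols (1,a,b) \<noteq> Zc cols (1,0,c)"
  unfolding Z_gen[OF h0 h1] Z_b[OF h2]
  by (rule G_E2[OF q2 SFq]; simp add: F_lt F_ne1 F_ne1s H_lt assms)

lemmas c13r = c13[THEN not_sym]

lemma c14:
  assumes h0: "a \<noteq> 0" and h1: "b \<noteq> 0"
  shows "Zc cols (1,a,b) \<noteq> Zc cols (1,0,0)"
  unfolding Z_gen[OF h0 h1] Z_100
  by (rule G_X0[OF q2 SFq]; simp add: F_lt F_ne1 F_ne1s H_lt assms)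

lemmas c14r = c14[THEN not_sym]

lemma c15:
  assumes h0: "a \<noteq> 0" and h1: "b \<noteq> 0" and h2: "c \<noteq> 0"
  shows "Zc cols (1,a,b) \<noteq> Zc cols (0,1,c)"
  unfolding Z_gen[OF h0 h1] Z_0b[OF h2]
  by (rule G_E1[OF q2 SFq]; simp add: F_lt F_ne1 F_ne1s H_lt assms)

lemmas c15r = c15[THEN not_sym]

lemma c16:
  assumes h0: "a \<noteq> 0" and h1: "b \<noteq> 0"
  shows "Zc cols (1,a,b) \<noteq> Zc cols (0,1,0)"
  unfolding Z_gen[OF h0 h1] Z_010
  by (rule G_Y0[OF q2 SFq]; simp add: F_lt F_ne1 F_ne1s H_lt assms)

lemmas c16r = c16[THEN not_sym]

lemma c17:
  assumes h0: "a \<noteq> 0" and h1: "b \<noteq> 0"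
  shows "Zc cols (1,a,b) \<noteq> Zc cols (0,0,1)"
  unfolding Z_gen[OF h0 h1] Z_001
  by (rule G_Z0[OF q2 SFq]; simp add: F_lt F_ne1 F_ne1s H_lt assms)

lemmas c17r = c17[THEN not_sym]

lemma c23:
  assumes h0: "a \<noteq> 0" and h1: "c \<noteq> 0"
  shows "Zc cols (1,a,0) \<noteq> Zc cols (1,0,c)"
  unfolding Z_a[OF h0] Z_b[OF h1]
  by (rule E3_E2[OF q2 SFq]; simp add: F_lt F_ne1 F_ne1s H_lt assms)

lemmas c23r = c23[THEN not_sym]

lemma c24:
  assumes h0: "a \<noteq> 0"
  shows "Zc cols (1,a,0) \<noteq> Zc cols (1,0,0)"
  unfolding Z_a[OF h0] Z_100
  by (rule E3_X0[OF q2 SFq]; simp add: F_lt F_ne1 F_ne1s H_lt assms)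

lemmas c24r = c24[THEN not_sym]

lemma c25:
  assumes h0: "a \<noteq> 0" and h1: "c \<noteq> 0"
  shows "Zc cols (1,a,0) \<noteq> Zc cols (0,1,c)"
  unfolding Z_a[OF h0] Z_0b[OF h1]
  by (rule E3_E1[OF q2 SFq]; simp add: F_lt F_ne1 F_ne1s H_lt assms)

lemmas c25r = c25[THEN not_sym]

lemma c26:
  assumes h0: "a \<noteq> 0"
  shows "Zc cols (1,a,0) \<noteq> Zc cols (0,1,0)"
  unfolding Z_a[OF h0] Z_010
  by (rule E3_Y0[OF q2 SFq]; simp add: F_lt F_ne1 F_ne1s H_lt assms)

lemmas c26r = c26[THEN not_sym]

lemma c27:
  assumes h0: "a \<noteq> 0"
  shows "Zc cols (1,a,0) \<noteq> Zc cols (0,0,1)"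
  unfolding Z_a[OF h0] Z_001
  by (rule E3_Z0[OF q2 SFq]; simp add: F_lt F_ne1 F_ne1s H_lt assms)

lemmas c27r = c27[THEN not_sym]

lemma c34:
  assumes h0: "a \<noteq> 0"
  shows "Zc cols (1,0,a) \<noteq> Zc cols (1,0,0)"
  unfolding Z_b[OF h0] Z_100
  by (rule E2_X0[OF q2 SFq]; simp add: F_lt F_ne1 F_ne1s H_lt assms)

lemmas c34r = c34[THEN not_sym]

lemma c35:
  assumes h0: "a \<noteq> 0" and h1: "c \<noteq> 0"
  shows "Zc cols (1,0,a) \<noteq> Zc cols (0,1,c)"
  unfolding Z_b[OF h0] Z_0b[OF h1]
  by (rule E2_E1[OF q2 SFq]; simp add: F_lt F_ne1 F_ne1s H_lt assms)

lemmas c35r = c35[THEN not_sym]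

lemma c36:
  assumes h0: "a \<noteq> 0"
  shows "Zc cols (1,0,a) \<noteq> Zc cols (0,1,0)"
  unfolding Z_b[OF h0] Z_010
  by (rule E2_Y0[OF q2 SFq]; simp add: F_lt F_ne1 F_ne1s H_lt assms)

lemmas c36r = c36[THEN not_sym]

lemma c37:
  assumes h0: "a \<noteq> 0"
  shows "Zc cols (1,0,a) \<noteq> Zc cols (0,0,1)"
  unfolding Z_b[OF h0] Z_001
  by (rule E2_Z0[OF q2 SFq]; simp add: F_lt F_ne1 F_ne1s H_lt assms)

lemmas c37r = c37[THEN not_sym]

lemma c45:
  assumes h0: "c \<noteq> 0"
  shows "Zc cols (1,0,0) \<noteq> Zc cols (0,1,c)"
  unfolding Z_100 Z_0b[OF h0]
  by (rule X0_E1[OF q2 SFq]; simp add: F_lt F_ne1 F_ne1s H_lt assms)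

lemmas c45r = c45[THEN not_sym]

lemma c46:
  shows "Zc cols (1,0,0) \<noteq> Zc cols (0,1,0)"
  unfolding Z_100 Z_010
  by (rule X0_Y0[OF q2 SFq]; simp add: F_lt F_ne1 F_ne1s H_lt)

lemmas c46r = c46[THEN not_sym]

lemma c47:
  shows "Zc cols (1,0,0) \<noteq> Zc cols (0,0,1)"
  unfolding Z_100 Z_001
  by (rule X0_Z0[OF q2 SFq]; simp add: F_lt F_ne1 F_ne1s H_lt)

lemmas c47r = c47[THEN not_sym]

lemma c56:
  assumes h0: "a \<noteq> 0"
  shows "Zc cols (0,1,a) \<noteq> Zc cols (0,1,0)"
  unfolding Z_0b[OF h0] Z_010
  by (rule E1_Y0[OF q2 SFq]; simp add: F_lt F_ne1 F_ne1s H_lt assms)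

lemmas c56r = c56[THEN not_sym]

lemma c57:
  assumes h0: "a \<noteq> 0"
  shows "Zc cols (0,1,a) \<noteq> Zc cols (0,0,1)"
  unfolding Z_0b[OF h0] Z_001
  by (rule E1_Z0[OF q2 SFq]; simp add: F_lt F_ne1 F_ne1s H_lt assms)

lemmas c57r = c57[THEN not_sym]

lemma c67:
  shows "Zc cols (0,1,0) \<noteq> Zc cols (0,0,1)"
  unfolding Z_010 Z_001
  by (rule Y0_Z0[OF q2 SFq]; simp add: F_lt F_ne1 F_ne1s H_lt)

lemmas c67r = c67[THEN not_sym]

lemmas cpairs = c12 c12r c13 c13r c14 c14r c15 c15r c16 c16r c17 c17r c23 c23r c24 c24r c25 c25r c26 c26r c27 c27r c34 c34r c35 c35r c36 c36r c37 c37r c45 c45r c46 c46r c47 c47r c56 c56r c57 c57r c67 c67r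


lemma inv_eq: "(-1/(a::'a)) = -1/c \<Longrightarrow> a = c"
  by simp

lemma c11: assumes "a \<noteq> 0" "b \<noteq> 0" "c \<noteq> 0" "d \<noteq> 0"
  shows "(Zc cols (1,a,b) = Zc cols (1,c,d)) = (a = c \<and> b = d)"
proof
  assume "Zc cols (1,a,b) = Zc cols (1,c,d)"
  hence "F(-1/a) + q*F(-1/b) + q^2*H(-a/b) = F(-1/c) + q*F(-1/d) + q^2*H(-c/d)"
    unfolding Z_gen[OF assms(1,2)] Z_gen[OF assms(3,4)] .
  from dig3[OF _ _ _ _ this] have "F(-1/a) = F(-1/c)" "F(-1/b) = F(-1/d)"
    using assms by (simp_all add: F_lt)
  hence "-1/a = -1/c" "-1/b = -1/d" using F_inj[of "-1/a" "-1/c"] F_inj[of "-1/b" "-1/d"] assms by simp_all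
  thus "a = c \<and> b = d" using inv_eq by blast
qed simp

lemma c22: assumes "a \<noteq> 0" "c \<noteq> 0"
  shows "(Zc cols (1,a,0) = Zc cols (1,c,0)) = (a = c)"
proof
  assume "Zc cols (1,a,0) = Zc cols (1,c,0)"
  hence "F(-1/a) = F(-1/c)" unfolding Z_a[OF assms(1)] Z_a[OF assms(2)] by simp
  hence "-1/a = -1/c" using F_inj[of "-1/a" "-1/c"] assms by simp
  thus "a = c" using inv_eq by blast
qed simp

lemma c33: assumes "a \<noteq> 0" "c \<noteq> 0"
  shows "(Zc cols (1,0,a) = Zc cols (1,0,c)) = (a = c)"
proof
  assume "Zc cols (1,0,a) = Zc cols (1,0,c)"
  hence "F(-1/a) = F(-1/c)" unfolding Z_b[OF assms(1)] Z_b[OF assms(2)] using q2 by simp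
  hence "-1/a = -1/c" using F_inj[of "-1/a" "-1/c"] assms by simp
  thus "a = c" using inv_eq by blast
qed simp

lemma c55: assumes "a \<noteq> 0" "c \<noteq> 0"
  shows "(Zc cols (0,1,a) = Zc cols (0,1,c)) = (a = c)"
proof
  assume "Zc cols (0,1,a) = Zc cols (0,1,c)"
  hence "H(-1/a) = H(-1/c)" unfolding Z_0b[OF assms(1)] Z_0b[OF assms(2)] using q2 by simp
  hence "-1/a = -1/c" using phi_inj[of "-1/a" "-1/c"] assms by simp
  thus "a = c" using inv_eq by blast
qed simp

lemma classify:
  assumes "r \<in> (Rset :: ('a \<times> 'a \<times> 'a) set)"
  shows "(\<exists>a b. a \<noteq> 0 \<and> b \<noteq> 0 \<and> r = (1,a,b)) \<or> (\<exists>a. a \<noteq> 0 \<and> r = (1,a,0)) \<or>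
         (\<exists>a. a \<noteq> 0 \<and> r = (1,0,a)) \<or> r = (1,0,0) \<or> (\<exists>a. a \<noteq> 0 \<and> r = (0,1,a)) \<or>
         r = (0,1,0) \<or> r = (0,0,1)"
  using assms unfolding Rset_def by (cases r) auto

lemma inj_cols: "inj_on (Zc cols) Rset"
proof (rule inj_onI)
  fix x y assume x: "x \<in> Rset" and y: "y \<in> Rset" and eq: "Zc cols x = Zc cols y"
  from classify[OF x] classify[OF y] eq show "x = y"
    by (elim disjE exE conjE; simp add: cpairs c11 c22 c33 c55)
qed

lemma set_cols_nz: "\<forall>v\<in>set cols. v \<noteq> (0,0,0)"
  unfolding mkcols_def by (auto simp: blk_def)

lemma mem_cols: "(1,0,0) \<in> set cols" "(0,0,1) \<in> set cols" "(0,1,1) \<in> set cols"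
proof -
  show "(1,0,0) \<in> set cols" using q2 unfolding mkcols_def by auto
  show "(0,0,1) \<in> set cols" unfolding mkcols_def by auto
  have "(1::'a) \<in> set nzl" using nzl by simp
  moreover have "0 < q^2 * H 1" using q2 by simp
  ultimately show "(0,1,1) \<in> set cols" unfolding mkcols_def blk_def by force
qed

lemma indep_cols: "(\<forall>v\<in>set cols. dotv c v = 0) \<Longrightarrow> c = (0,0,0)"
proof -
  assume h: "\<forall>v\<in>set cols. dotv c v = 0"
  obtain c0 c1 c2 where c: "c = (c0,c1,c2)" by (cases c) auto
  have "dotv c (1,0,0) = 0" "dotv c (0,0,1) = 0" "dotv c (0,1,1) = 0" using h mem_cols by auto
  thus ?thesis unfolding c by (simp add: dotv_def)
qed

lemma length_bound: "2 * length cols = q*(q-1)*(q^2+q+1)"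
proof -
  have "2 * length cols = (2*SF+2)*(q^2+q+1) - 2*(q^2+q+1) + 2*(q^2+q+1)"
    unfolding length_cols by (simp add: algebra_simps)
  also have "\<dots> = (2*SF+2)*(q^2+q+1)" by simp
  also have "\<dots> = q*(q-1)*(q^2+q+1)" using SFq by simp
  finally show ?thesis .
qed

lemma main_ctx: "\<exists>(n::nat) (C :: (nat \<Rightarrow> 'a) set).
           is_MWS_code n 3 C \<and>
           real n \<le> (real q - 1) / 2 * (real q ^ 3 + real q ^ 2 + real q)"
proof (intro exI conjI)
  show "is_MWS_code (length cols) 3 {x. \<exists>c::nat\<Rightarrow>'a. \<forall>j. x j = (\<Sum>i<3. c i * cv cols i j)}"
    by (rule MWS_general[OF set_cols_nz indep_cols inj_cols])
  have e1: "real (q - 1) = real q - 1" using q2 by (simp add: of_nat_diff)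
  have "real (2 * length cols) = real (q*(q-1)*(q^2+q+1))" using length_bound by (rule arg_cong)
  also have "\<dots> = real q * real (q - 1) * (real q ^ 2 + real q + 1)"
    by (simp only: of_nat_mult of_nat_add of_nat_power of_nat_1)
  finally have "2 * real (length cols) = real q * (real q - 1) * (real q ^ 2 + real q + 1)"
    unfolding e1 by simp
  moreover have "(real q - 1) / 2 * (real q ^ 3 + real q ^ 2 + real q)
      = (real q * (real q - 1) * (real q ^ 2 + real q + 1)) / 2"
    by (simp add: field_simps power2_eq_square power3_eq_cube)
  ultimately show "real (length cols) \<le> (real q - 1) / 2 * (real q ^ 3 + real q ^ 2 + real q)"
    by linarith
qed

end

theorem mainTheorem14:
  fixes q :: nat
  assumes "q = card (UNIV :: 'a::{field,finite} set)"
  shows "\<exists>(n::nat) (C :: (nat \<Rightarrow> 'a) set).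
           is_MWS_code n 3 C \<and>
           real n \<le> (real q - 1) / 2 * (real q ^ 3 + real q ^ 2 + real q)"
proof -
  obtain nzl :: "'a list" where nzl: "distinct nzl" "set nzl = -{0}"
    using finite_distinct_list[of "-{0::'a}"] by auto
  have "card (-{0::'a}) = q - 1" using assms
    by (simp add: Compl_eq_Diff_UNIV card_Diff_singleton)
  hence "card (-{0::'a}) = card {..<q-1}" by simp
  then obtain phi :: "'a \<Rightarrow> nat" where phi: "bij_betw phi (-{0}) {..<q-1}"
    using finite_same_card_bij[of "-{0::'a}" "{..<q-1}"] by auto
  show ?thesis by (rule main_ctx[OF nzl phi assms])
qed


end
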